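(* For a finite list $L=[l_1,l_2,\dots,l_n]$ of nonnegative integers, let $A(L)$ denote the number of words that contain exactly $l_j$ copies of the letter $j$ for each $1\le j\le n$ (and no other letters) and avoid the pattern $123$; the empty word is counted, so $A(L)=1$ if all $l_j=0$. If $l_1+\dots+l_n\ge 1$, then $$A(L)=\sum_{\substack{1\le i\le n\\ l_i\ge 1}} A\big([\,l_1,l_2,\dots,l_{i-1},\ l_i-1,\ l_{i+1}+l_{i+2}+\dots+l_n\,]\big),$$ where for $i=n$ the last entry $l_{i+1}+\dots+l_n$ is the empty sum $0$.
   Context: A word $w_1\cdots w_m$ over the positive integers contains a pattern $p_1\cdots p_k$ if there are indices $i_1<\dots<i_k$ such that for all $r,s$: $w_{i_r}<w_{i_s}\iff p_r<p_s$ and $w_{i_r}>w_{i_s}\iff p_r>p_s$; otherwise it avoids it. In particular, containing $123$ means having three positions $i_1<i_2<i_3$ with $w_{i_1}<w_{i_2}<w_{i_3}$. *)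

theory Defs
  imports Main
begin

definition contains_pattern :: "nat list \<Rightarrow> nat list \<Rightarrow> bool" where
  "contains_pattern w p \<longleftrightarrow>
     (\<exists>idx :: nat list. length idx = length p \<and> sorted_wrt (<) idx \<and>
        (\<forall>r\<in>set idx. r < length w) \<and>
        (\<forall>r < length p. \<forall>s < length p.
            (w ! (idx ! r) < w ! (idx ! s) \<longleftrightarrow> p ! r < p ! s) \<and>
            (w ! (idx ! r) > w ! (idx ! s) \<longleftrightarrow> p ! r > p ! s)))"

definition avoids_pattern :: "nat list \<Rightarrow> nat list \<Rightarrow> bool" where
  "avoids_pattern w p \<longleftrightarrow> \<not> contains_pattern w p"

definition words_with_content :: "nat list \<Rightarrow> nat list set" where
  "words_with_content L = {w. set w \<subseteq> {1..length L} \<and>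
       (\<forall>j\<in>{1..length L}. count_list w j = L ! (j - 1))}"

definition A :: "nat list \<Rightarrow> nat" where
  "A L = card {w \<in> words_with_content L. avoids_pattern w [1,2,3]}"

end

theory Submission imports Defs "HOL-Library.Multiset" begin


definition P3 :: "nat list \<Rightarrow> bool" where
 "P3 w \<longleftrightarrow> (\<exists>i j k. i<j \<and> j<k \<and> k<length w \<and> w!i<w!j \<and> w!j<w!k)"

lemma less3: "(r::nat) < 3 \<Longrightarrow> r = 0 \<or> r = 1 \<or> r = 2" by auto

lemma cp123: "contains_pattern w [1,2,3] \<longleftrightarrow> P3 w"
proof
  assume "contains_pattern w [1,2,3]"
  then obtain idx where l: "length idx = length [1,2,3::nat]" and s: "sorted_wrt (<) idx"
    and b: "\<forall>r\<in>set idx. r < length w"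
    and c: "\<forall>r < length [1,2,3::nat]. \<forall>s < length [1,2,3::nat]. (w ! (idx ! r) < w ! (idx ! s) \<longleftrightarrow> [1,2,3::nat] ! r < [1,2,3::nat] ! s) \<and>
            (w ! (idx ! r) > w ! (idx ! s) \<longleftrightarrow> [1,2,3::nat] ! r > [1,2,3::nat] ! s)"
    unfolding contains_pattern_def by blast
  obtain i j k where idx: "idx = [i,j,k]" using l
    by (metis (no_types) length_0_conv length_Suc_conv numeral_3_eq_3)
  show "P3 w" unfolding P3_def
    apply (rule exI[of _ i], rule exI[of _ j], rule exI[of _ k])
    using s b c[rule_format, of 0 1] c[rule_format, of 1 2] by (auto simp: idx)
next
  assume "P3 w"
  then obtain i j k where h: "i<j" "j<k" "k<length w" "w!i<w!j" "w!j<w!k" unfolding P3_def by blast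
  show "contains_pattern w [1,2,3]" unfolding contains_pattern_def
    apply (rule exI[of _ "[i,j,k]"])
    using h by (auto simp: less_Suc_eq numeral_3_eq_3)
qed

definition Q :: "nat \<Rightarrow> nat list \<Rightarrow> bool" where
 "Q a u \<longleftrightarrow> (\<exists>j k. j<k \<and> k<length u \<and> a<u!j \<and> u!j<u!k)"

lemma P3_Cons: "P3 (x#u) \<longleftrightarrow> P3 u \<or> Q x u"
proof
  assume "P3 (x#u)"
  then obtain i j k where h: "i<j" "j<k" "k<length (x#u)" "(x#u)!i<(x#u)!j" "(x#u)!j<(x#u)!k" unfolding P3_def by blast
  show "P3 u \<or> Q x u"
  proof (cases i)
    case 0
    obtain j' k' where "j = Suc j'" "k = Suc k'" using h 0 by (cases j; cases k) auto
    then show ?thesis using h 0 unfolding Q_def by auto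
  next
    case (Suc i')
    obtain j' k' where "j = Suc j'" "k = Suc k'" using h Suc by (cases j; cases k) auto
    then show ?thesis using h Suc unfolding P3_def by auto
  qed
next
  assume "P3 u \<or> Q x u"
  then show "P3 (x#u)"
  proof
    assume "P3 u"
    then obtain i j k where h: "i<j" "j<k" "k<length u" "u!i<u!j" "u!j<u!k" unfolding P3_def by blast
    show ?thesis unfolding P3_def by (rule exI[of _ "Suc i"], rule exI[of _ "Suc j"], rule exI[of _ "Suc k"]) (use h in auto)
  next
    assume "Q x u"
    then obtain j k where h: "j<k" "k<length u" "x<u!j" "u!j<u!k" unfolding Q_def by blast
    show ?thesis unfolding P3_def by (rule exI[of _ 0], rule exI[of _ "Suc j"], rule exI[of _ "Suc k"]) (use h in auto)
  qed
qed

lemma Q_Cons: "Q a (x#xs) \<longleftrightarrow> Q a xs \<or> (a<x \<and> (\<exists>y\<in>set xs. x<y))"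
proof
  assume "Q a (x#xs)"
  then obtain j k where h: "j<k" "k<length (x#xs)" "a<(x#xs)!j" "(x#xs)!j<(x#xs)!k" unfolding Q_def by blast
  obtain k' where k: "k = Suc k'" using h by (cases k) auto
  show "Q a xs \<or> (a<x \<and> (\<exists>y\<in>set xs. x<y))"
  proof (cases j)
    case 0 then show ?thesis using h k by auto
  next
    case (Suc j') then show ?thesis using h k unfolding Q_def by auto
  qed
next
  assume "Q a xs \<or> (a<x \<and> (\<exists>y\<in>set xs. x<y))"
  then show "Q a (x#xs)"
  proof
    assume "Q a xs"
    then obtain j k where h: "j<k" "k<length xs" "a<xs!j" "xs!j<xs!k" unfolding Q_def by blast
    show ?thesis unfolding Q_def by (rule exI[of _ "Suc j"], rule exI[of _ "Suc k"]) (use h in auto)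
  next
    assume "a<x \<and> (\<exists>y\<in>set xs. x<y)"
    then obtain k where h: "a<x" "k<length xs" "x<xs!k" by (auto simp: in_set_conv_nth)
    show ?thesis unfolding Q_def by (rule exI[of _ 0], rule exI[of _ "Suc k"]) (use h in auto)
  qed
qed

lemma Q_iff: "\<not> Q a u \<longleftrightarrow> sorted (rev (filter (\<lambda>x. a<x) u))"
proof (induction u)
  case Nil then show ?case by (simp add: Q_def)
next
  case (Cons x xs)
  then show ?case by (auto simp: Q_Cons sorted_append not_less)
qed

definition h :: "nat \<Rightarrow> nat \<Rightarrow> nat" where "h a x = (if a < x then Suc a else x)"

lemma P3_map: assumes "\<not> Q a u" shows "P3 (map (h a) u) \<longleftrightarrow> P3 u"
proof
  assume "P3 (map (h a) u)"
  then obtain i j k where hh: "i<j" "j<k" "k<length u" "h a (u!i)<h a (u!j)" "h a (u!j)<h a (u!k)" unfolding P3_def by auto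
  have "u!i < u!j" "u!j<u!k" using hh(4,5) unfolding h_def by (auto split: if_splits)
  then show "P3 u" using hh unfolding P3_def by blast
next
  assume "P3 u"
  then obtain i j k where hh: "i<j" "j<k" "k<length u" "u!i<u!j" "u!j<u!k" unfolding P3_def by blast
  have "\<not> a < u!j" using assms hh unfolding Q_def by auto
  then have hh2: "h a (u!i)<h a (u!j)" "h a (u!j)<h a (u!k)" using hh(4,5) unfolding h_def by auto
  show "P3 (map (h a) u)" unfolding P3_def apply (rule exI[of _ i], rule exI[of _ j], rule exI[of _ k]) using hh hh2 by auto
qed

fun fill :: "nat \<Rightarrow> nat list \<Rightarrow> nat list \<Rightarrow> nat list" where
  "fill a bs [] = []"
| "fill a bs (x#xs) = (if x = Suc a then hd bs # fill a (tl bs) xs else x # fill a bs xs)"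

lemma fill_map: "fill a (filter (\<lambda>x. a<x) u) (map (h a) u) = u"
  by (induction u) (auto simp: h_def)

lemma map_fill:
  assumes "\<forall>x\<in>set v. x \<le> Suc a" "\<forall>b\<in>set bs. a<b" "length bs = count_list v (Suc a)"
  shows "map (h a) (fill a bs v) = v \<and> filter (\<lambda>x. a<x) (fill a bs v) = bs
     \<and> set (fill a bs v) \<subseteq> set bs \<union> {x\<in>set v. x \<noteq> Suc a}"
  using assms
proof (induction v arbitrary: bs)
  case Nil then show ?case by auto
next
  case (Cons x xs)
  show ?case
  proof (cases "x = Suc a")
    case True
    then obtain b bs' where bs: "bs = b # bs'" using Cons.prems by (cases bs) auto
    have "map (h a) (fill a bs' xs) = xs \<and> filter (\<lambda>x. a<x) (fill a bs' xs) = bs'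
     \<and> set (fill a bs' xs) \<subseteq> set bs' \<union> {x\<in>set xs. x \<noteq> Suc a}"
      using Cons bs True by auto
    moreover have "h a b = Suc a" using Cons.prems bs by (simp add: h_def)
    ultimately show ?thesis using True bs Cons.prems by auto
  next
    case False
    have "map (h a) (fill a bs xs) = xs \<and> filter (\<lambda>x. a<x) (fill a bs xs) = bs
     \<and> set (fill a bs xs) \<subseteq> set bs \<union> {x\<in>set xs. x \<noteq> Suc a}"
      using Cons False by auto
    moreover have "\<not> a < x" using False Cons.prems by auto
    moreover have "h a x = x" using \<open>\<not> a < x\<close> by (simp add: h_def)
    ultimately show ?thesis using False by auto
  qed
qed

lemma count_map_h: "j \<le> a \<Longrightarrow> count_list (map (h a) u) j = count_list u j"
  by (induction u) (auto simp: h_def)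

lemma count_map_h_Suc: "count_list (map (h a) u) (Suc a) = length (filter (\<lambda>x. a<x) u)"
  by (induction u) (auto simp: h_def)

lemma count_filter_gt: "a<j \<Longrightarrow> count_list (filter (\<lambda>x. a<x) u) j = count_list u j"
  by (induction u) auto



lemma sum_shift1: "(\<Sum>j\<in>{Suc a..n}. f (j-1)) = (\<Sum>k\<in>{a..<n}. (f k::nat))"
proof -
  have "{Suc a..n} = Suc ` {a..<n}" using atLeastLessThanSuc_atLeastAtMost[of "Suc a" n] image_Suc_atLeastLessThan[of a n] by simp
  then have "(\<Sum>j\<in>{Suc a..n}. f (j-1)) = (\<Sum>j\<in>Suc ` {a..<n}. f (j-1))" by (simp only:)
  also have "\<dots> = (\<Sum>k\<in>{a..<n}. f k)" by (subst sum.reindex) auto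
  finally show ?thesis .
qed

lemma sumdrop: "sum_list (drop m L) = (\<Sum>k=m..<length L. L!k)"
proof (induction L arbitrary: m)
  case Nil then show ?case by simp
next
  case (Cons x xs)
  show ?case
  proof (cases m)
    case 0
    then show ?thesis by (simp only: drop_0 sum_list_sum_nth)
  next
    case (Suc m')
    have "(\<Sum>k=Suc m'..<Suc (length xs). (x#xs)!k) = (\<Sum>k=m'..<length xs. xs!k)"
      by (subst sum.shift_bounds_Suc_ivl) simp
    then show ?thesis using Cons[of m'] Suc by simp
  qed
qed

lemma len_words: assumes "w \<in> words_with_content L" shows "length w = (\<Sum>j\<in>{1..length L}. L!(j-1))"
proof -
  have s: "set w \<subseteq> {1..length L}" and c: "\<forall>j\<in>{1..length L}. count_list w j = L ! (j - 1)"
    using assms unfolding words_with_content_def by auto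
  have "length w = sum (count_list w) {1..length L}" using sum_count_set[OF s] by simp
  also have "\<dots> = (\<Sum>j\<in>{1..length L}. L!(j-1))" using c by (intro sum.cong) auto
  finally show ?thesis .
qed

lemma finite_S: "finite {w \<in> words_with_content L. P w}"
proof -
  have "{w \<in> words_with_content L. P w} \<subseteq> {w. set w \<subseteq> {1..length L} \<and> length w = (\<Sum>j\<in>{1..length L}. L!(j-1))}"
  proof
    fix w assume "w \<in> {w \<in> words_with_content L. P w}"
    then have "w \<in> words_with_content L" by blast
    then show "w \<in> {w. set w \<subseteq> {1..length L} \<and> length w = (\<Sum>j\<in>{1..length L}. L!(j-1))}"
      using len_words[of w L] unfolding words_with_content_def by blast
  qed
  then show ?thesis using finite_lists_length_eq[of "{1..length L}"] finite_subset by blast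
qed

lemma A_alt: "A L = card {w \<in> words_with_content L. \<not> P3 w}"
  unfolding A_def avoids_pattern_def cp123 by (rule refl)



lemma key:
  assumes iL: "i < length L" and Li: "1 \<le> L!i"
  shows "card {w \<in> words_with_content L. \<not>P3 w \<and> w \<noteq> [] \<and> hd w = Suc i}
       = card {v \<in> words_with_content (take i L @ [L!i - 1, sum_list (drop (Suc i) L)]). \<not> P3 v}"
proof -
  define a where "a = Suc i"
  define n where "n = length L"
  define L' where "L' = take i L @ [L!i - 1, sum_list (drop (Suc i) L)]"
  define S where "S = {w \<in> words_with_content L. \<not>P3 w \<and> w \<noteq> [] \<and> hd w = Suc i}"
  define T where "T = {v \<in> words_with_content L'. \<not> P3 v}"
  have an: "a \<le> n" using iL unfolding a_def n_def by simp
  have lenL': "length L' = Suc a" unfolding L'_def a_def using iL by simp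
  have L'1: "j < i \<Longrightarrow> L'!j = L!j" for j unfolding L'_def using iL by (simp add: nth_append)
  have L'2: "L'!i = L!i - 1" unfolding L'_def using iL by (simp add: nth_append)
  have L'3: "L'!a = (\<Sum>j\<in>{Suc a..n}. L!(j-1))"
  proof -
    have "L'!a = sum_list (drop a L)" unfolding L'_def a_def using iL by (simp add: nth_append)
    also have "\<dots> = (\<Sum>k=a..<n. L!k)" unfolding n_def by (rule sumdrop)
    also have "\<dots> = (\<Sum>j\<in>{Suc a..n}. L!(j-1))" by (rule sum_shift1[symmetric])
    finally show ?thesis .
  qed
  have WL: "w \<in> words_with_content L \<longleftrightarrow> set w \<subseteq> {1..n} \<and> (\<forall>j\<in>{1..n}. count_list w j = L!(j-1))" for w
    unfolding words_with_content_def n_def by simp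
  have WL': "v \<in> words_with_content L' \<longleftrightarrow> set v \<subseteq> {1..Suc a} \<and> (\<forall>j\<in>{1..Suc a}. count_list v j = L'!(j-1))" for v
    unfolding words_with_content_def lenL' by simp
  have big: "length (filter (\<lambda>x. a<x) u) = (\<Sum>j\<in>{Suc a..n}. L!(j-1))"
    if "a # u \<in> words_with_content L" for u
  proof -
    have s: "set (a#u) \<subseteq> {1..n}" and c: "\<forall>j\<in>{1..n}. count_list (a#u) j = L!(j-1)" using that WL by auto
    have s2: "set (filter (\<lambda>x. a<x) u) \<subseteq> {Suc a..n}" using s by auto
    have "length (filter (\<lambda>x. a<x) u) = sum (count_list (filter (\<lambda>x. a<x) u)) {Suc a..n}"
      using sum_count_set[OF s2] by simp
    also have "\<dots> = (\<Sum>j\<in>{Suc a..n}. L!(j-1))"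
    proof (intro sum.cong refl)
      fix j assume j: "j \<in> {Suc a..n}"
      then have "count_list (filter (\<lambda>x. a<x) u) j = count_list u j" by (intro count_filter_gt) auto
      also have "\<dots> = count_list (a#u) j" using j by auto
      also have "\<dots> = L!(j-1)" using bspec[OF c, of j] j by simp
      finally show "count_list (filter (\<lambda>x. a<x) u) j = L!(j-1)" .
    qed
    finally show ?thesis .
  qed
  have fwd: "map (h a) u \<in> T" if "a # u \<in> S" for u
  proof -
    have w: "a # u \<in> words_with_content L" and np: "\<not> P3 (a#u)" using that unfolding S_def by auto
    have s: "set (a#u) \<subseteq> {1..n}" and c: "\<forall>j\<in>{1..n}. count_list (a#u) j = L!(j-1)" using w WL by auto
    have nq: "\<not> Q a u" and np2: "\<not> P3 u" using np P3_Cons by auto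
    have "set (map (h a) u) \<subseteq> {1..Suc a}"
    proof
      fix y assume "y \<in> set (map (h a) u)"
      then obtain x where "x \<in> set u" "y = h a x" by auto
      moreover then have "1 \<le> x" using s by auto
      ultimately show "y \<in> {1..Suc a}" unfolding h_def by auto
    qed
    moreover have "\<forall>j\<in>{1..Suc a}. count_list (map (h a) u) j = L'!(j-1)"
    proof
      fix j assume j: "j \<in> {1..Suc a}"
      consider "j < a" | "j = a" | "j = Suc a" using j by fastforce
      then show "count_list (map (h a) u) j = L'!(j-1)"
      proof cases
        case 1
        then have "count_list (map (h a) u) j = count_list (a#u) j" using count_map_h[of j a u] by simp
        also have "\<dots> = L!(j-1)" using bspec[OF c, of j] j 1 an by simp
        also have "\<dots> = L'!(j-1)" using L'1[of "j-1"] 1 j unfolding a_def by auto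
        finally show ?thesis .
      next
        case 2
        then have "count_list (map (h a) u) j = count_list (a#u) a - 1" using count_map_h[of j a u] by simp
        also have "\<dots> = L!i - 1" using bspec[OF c, of a] an unfolding a_def by simp
        finally show ?thesis using L'2 2 unfolding a_def by simp
      next
        case 3
        then show ?thesis using count_map_h_Suc[of a u] big[OF w] L'3 by simp
      qed
    qed
    moreover have "\<not> P3 (map (h a) u)" using P3_map[OF nq] np2 by simp
    ultimately show ?thesis unfolding T_def WL' by simp
  qed
  have S_cons: "w \<in> S \<Longrightarrow> w = a # tl w" for w unfolding S_def a_def by (cases w) auto
  have inj: "inj_on (\<lambda>w. map (h a) (tl w)) S"
  proof (rule inj_onI)
    fix w1 w2 assume w1: "w1 \<in> S" and w2: "w2 \<in> S" and e: "map (h a) (tl w1) = map (h a) (tl w2)"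
    define u1 where "u1 = tl w1"
    define u2 where "u2 = tl w2"
    have w1e: "w1 = a # u1" and w2e: "w2 = a # u2" using S_cons w1 w2 unfolding u1_def u2_def by auto
    have W1: "a # u1 \<in> words_with_content L" and W2: "a # u2 \<in> words_with_content L"
      using w1 w2 w1e w2e unfolding S_def by auto
    have "\<not> Q a u1" "\<not> Q a u2" using w1 w2 w1e w2e P3_Cons unfolding S_def by auto
    then have so1: "sorted (rev (filter (\<lambda>x. a<x) u1))" and so2: "sorted (rev (filter (\<lambda>x. a<x) u2))"
      using Q_iff by auto
    have cnt: "count_list (filter (\<lambda>x. a<x) u1) j = count_list (filter (\<lambda>x. a<x) u2) j" for j
    proof (cases "a < j")
      case False
      then have "j \<notin> set (filter (\<lambda>x. a<x) u1)" "j \<notin> set (filter (\<lambda>x. a<x) u2)" by auto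
      then show ?thesis by (simp add: count_list_0_iff)
    next
      case True
      have s1: "set (a#u1) \<subseteq> {1..n}" and c1: "\<forall>j\<in>{1..n}. count_list (a#u1) j = L!(j-1)" using W1 WL by auto
      have s2: "set (a#u2) \<subseteq> {1..n}" and c2: "\<forall>j\<in>{1..n}. count_list (a#u2) j = L!(j-1)" using W2 WL by auto
      have "count_list u1 j = count_list u2 j"
      proof (cases "j \<le> n")
        case True
        then show ?thesis using bspec[OF c1, of j] bspec[OF c2, of j] \<open>a<j\<close> by simp
      next
        case False
        then have "j \<notin> set u1" "j \<notin> set u2" using s1 s2 by auto
        then show ?thesis by (simp add: count_list_0_iff)
      qed
      then show ?thesis using count_filter_gt[OF True] by simp
    qed
    have "mset (rev (filter (\<lambda>x. a<x) u1)) = mset (rev (filter (\<lambda>x. a<x) u2))"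
      unfolding mset_rev by (rule multiset_eqI) (simp only: count_mset cnt)
    then have "rev (filter (\<lambda>x. a<x) u1) = rev (filter (\<lambda>x. a<x) u2)"
      using properties_for_sort[OF _ so1] properties_for_sort[OF _ so2] by metis
    then have f: "filter (\<lambda>x. a<x) u1 = filter (\<lambda>x. a<x) u2" by simp
    have "u1 = u2" using fill_map[of a u1] fill_map[of a u2] e f unfolding u1_def u2_def by metis
    then show "w1 = w2" using w1e w2e by simp
  qed
  have surj: "T \<subseteq> (\<lambda>w. map (h a) (tl w)) ` S"
  proof
    fix v assume v: "v \<in> T"
    have sv: "set v \<subseteq> {1..Suc a}" and cv: "\<forall>j\<in>{1..Suc a}. count_list v j = L'!(j-1)" and npv: "\<not> P3 v"
      using v WL' unfolding T_def by auto
    define M where "M = (\<Sum>j\<in>{Suc a..n}. replicate_mset (L!(j-1)) j)"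
    define bs where "bs = rev (sorted_list_of_multiset M)"
    have cM: "count M j = (if j \<in> {Suc a..n} then L!(j-1) else 0)" for j
      unfolding M_def count_sum by (simp add: count_replicate_mset)
    have cbs: "count_list bs j = (if j \<in> {Suc a..n} then L!(j-1) else 0)" for j
      unfolding bs_def using cM[of j] by (simp flip: count_mset)
    have setbs: "set bs \<subseteq> {Suc a..n}"
    proof
      fix x assume "x \<in> set bs"
      then have "count_list bs x \<noteq> 0" by (simp add: count_list_0_iff)
      then show "x \<in> {Suc a..n}" using cbs[of x] by (auto split: if_splits)
    qed
    have lbs: "length bs = count_list v (Suc a)"
    proof -
      have "length bs = sum (count_list bs) {Suc a..n}" using sum_count_set[OF setbs] by simp
      also have "\<dots> = (\<Sum>j\<in>{Suc a..n}. L!(j-1))" using cbs by (intro sum.cong) auto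
      also have "\<dots> = count_list v (Suc a)" using cv L'3 by auto
      finally show ?thesis .
    qed
    have sorted_bs: "sorted (rev bs)" unfolding bs_def by simp
    define u where "u = fill a bs v"
    have mf: "map (h a) u = v \<and> filter (\<lambda>x. a<x) u = bs \<and> set u \<subseteq> set bs \<union> {x\<in>set v. x \<noteq> Suc a}"
    proof -
      have h1: "\<forall>x\<in>set v. x \<le> Suc a" using sv by auto
      have h2: "\<forall>b\<in>set bs. a < b" using setbs by auto
      show ?thesis unfolding u_def by (rule map_fill[OF h1 h2 lbs])
    qed
    then have mu: "map (h a) u = v" and fu: "filter (\<lambda>x. a<x) u = bs"
      and su: "set u \<subseteq> set bs \<union> {x\<in>set v. x \<noteq> Suc a}" by auto
    have "set (a#u) \<subseteq> {1..n}"
    proof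
      fix x assume "x \<in> set (a#u)"
      then have "x = a \<or> x \<in> set bs \<or> (x \<in> set v \<and> x \<noteq> Suc a)" using su by auto
      then show "x \<in> {1..n}" using an setbs sv unfolding a_def by auto
    qed
    moreover have "\<forall>j\<in>{1..n}. count_list (a#u) j = L!(j-1)"
    proof
      fix j assume j: "j \<in> {1..n}"
      consider "j < a" | "j = a" | "a < j" by fastforce
      then show "count_list (a#u) j = L!(j-1)"
      proof cases
        case 1
        then have "count_list (a#u) j = count_list v j" using count_map_h[of j a u] mu by simp
        also have "\<dots> = L'!(j-1)" using cv j 1 by auto
        also have "\<dots> = L!(j-1)" using L'1[of "j-1"] 1 j unfolding a_def by auto
        finally show ?thesis .
      next
        case 2
        then have "count_list (a#u) j = 1 + count_list v a" using count_map_h[of a a u] mu by simp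
        also have "\<dots> = 1 + (L!i - 1)" using cv L'2 unfolding a_def by auto
        finally show ?thesis using Li 2 unfolding a_def by simp
      next
        case 3
        then have "count_list (a#u) j = count_list bs j" using count_filter_gt[OF 3, of u] fu by simp
        then show ?thesis using cbs[of j] 3 j by auto
      qed
    qed
    moreover have "\<not> Q a u" using Q_iff fu sorted_bs by simp
    moreover have "\<not> P3 u" using P3_map[OF \<open>\<not> Q a u\<close>] mu npv by simp
    ultimately have "a # u \<in> S" unfolding S_def a_def using WL P3_Cons by (simp add: a_def)
    moreover have "v = map (h a) (tl (a#u))" using mu by simp
    ultimately show "v \<in> (\<lambda>w. map (h a) (tl w)) ` S" by blast
  qed
  have img: "(\<lambda>w. map (h a) (tl w)) ` S = T"
  proof
    show "(\<lambda>w. map (h a) (tl w)) ` S \<subseteq> T"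
    proof
      fix y assume "y \<in> (\<lambda>w. map (h a) (tl w)) ` S"
      then obtain w where "w \<in> S" "y = map (h a) (tl w)" by blast
      then show "y \<in> T" using fwd[of "tl w"] S_cons[of w] by simp
    qed
  qed (rule surj)
  have "card S = card T" using bij_betw_same_card[of _ S T] inj img unfolding bij_betw_def by blast
  then show ?thesis unfolding S_def T_def L'_def .
qed



theorem theorem1:
  fixes L :: "nat list"
  assumes "sum_list L \<ge> 1"
  shows "A L = (\<Sum>i\<in>{i. i < length L \<and> L ! i \<ge> 1}.
                  A (take i L @ [L ! i - 1, sum_list (drop (Suc i) L)]))"
proof -
  define I where "I = {i. i < length L \<and> L ! i \<ge> 1}"
  define Si where "Si i = {w \<in> words_with_content L. \<not>P3 w \<and> w \<noteq> [] \<and> hd w = Suc i}" for i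
  have ex: "\<exists>k<length L. L!k \<ge> 1"
  proof (rule ccontr)
    assume "\<not> ?thesis"
    then have "\<forall>k\<in>{0..<length L}. L!k = 0" by auto
    then have "(\<Sum>k=0..<length L. L!k) = 0" by simp
    then show False using assms by (simp add: sum_list_sum_nth)
  qed
  then obtain k where k: "k < length L" "L!k \<ge> 1" by blast
  have eq: "{w \<in> words_with_content L. \<not> P3 w} = (\<Union>i\<in>I. Si i)"
  proof
    show "{w \<in> words_with_content L. \<not> P3 w} \<subseteq> (\<Union>i\<in>I. Si i)"
    proof
      fix w assume w: "w \<in> {w \<in> words_with_content L. \<not> P3 w}"
      then have s: "set w \<subseteq> {1..length L}" and c: "\<forall>j\<in>{1..length L}. count_list w j = L ! (j - 1)"
        unfolding words_with_content_def by auto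
      have "count_list w (Suc k) \<ge> 1" using bspec[OF c, of "Suc k"] k by simp
      then have ne: "w \<noteq> []" by auto
      then have hw: "hd w \<in> {1..length L}" using s hd_in_set by blast
      define i where "i = hd w - 1"
      have hi: "hd w = Suc i" using hw unfolding i_def by auto
      have "count_list w (hd w) \<ge> 1" using ne hd_in_set[OF ne] count_list_0_iff[of w "hd w"] by auto
      then have "L!i \<ge> 1" using bspec[OF c, of "hd w"] hw hi by simp
      then have "i \<in> I" using hw hi unfolding I_def by auto
      moreover have "w \<in> Si i" using w ne hi unfolding Si_def by auto
      ultimately show "w \<in> (\<Union>i\<in>I. Si i)" by blast
    qed
  qed (auto simp: Si_def)
  have "A L = card (\<Union>i\<in>I. Si i)" using A_alt eq by simp
  also have "\<dots> = (\<Sum>i\<in>I. card (Si i))"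
  proof (rule card_UN_disjoint)
    show "finite I" unfolding I_def by simp
    show "\<forall>i\<in>I. finite (Si i)" unfolding Si_def by (intro ballI finite_S)
    show "\<forall>i\<in>I. \<forall>j\<in>I. i \<noteq> j \<longrightarrow> Si i \<inter> Si j = {}" unfolding Si_def by auto
  qed
  also have "\<dots> = (\<Sum>i\<in>I. A (take i L @ [L ! i - 1, sum_list (drop (Suc i) L)]))"
  proof (rule sum.cong[OF refl])
    fix i assume "i \<in> I"
    then show "card (Si i) = A (take i L @ [L ! i - 1, sum_list (drop (Suc i) L)])"
      unfolding Si_def A_alt I_def using key by auto
  qed
  finally show ?thesis unfolding I_def .
qed


end
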